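(* For every Büchi automaton $A$ over the alphabet $2^{AP}$, $\mathrm{supp}(A)$ is an LTL theory, i.e., $\mathrm{Cn}_{LTL}(\mathrm{supp}(A))=\mathrm{supp}(A)$.
   Context: Fix a finite nonempty $AP$. LTL formulae $\varphi::=\bot\mid p\mid\neg\varphi\mid\varphi\lor\varphi\mid X\varphi\mid\varphi U\varphi$ with the standard trace semantics over $(2^{AP})^\omega$. Kripke structure $M=(S,I,T,\lambda)$: finite $S$, nonempty $I\subseteq S$, left-total $T$, $\lambda:S\to2^{AP}$; traces $\lambda(s_0)\lambda(s_1)\dots$ along paths from $I$; $M\models\varphi$ iff all traces of $M$ satisfy $\varphi$. $\mathrm{Cn}_{LTL}(X)$ = formulae satisfied by every Kripke structure satisfying all of $X$. Büchi automaton $A=(Q,\Sigma,\Delta,Q_0,R)$ accepts an infinite word iff there is a run from an initial state along $\Delta$ visiting $R$ infinitely often; $\mathcal{L}(A)$ its language. $\mathrm{supp}(A):=\{\varphi\mid\pi\models\varphi\ \forall\pi\in\mathcal{L}(A)\}$. *)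

theory Defs
  imports Main "HOL-Library.Infinite_Set"
begin

datatype 'ap ltl =
    Bot
  | Prop 'ap
  | Neg "'ap ltl"
  | Or "'ap ltl" "'ap ltl"
  | Next "'ap ltl"
  | Until "'ap ltl" "'ap ltl"

type_synonym 'ap word = "nat \<Rightarrow> 'ap set"

definition suffix_word :: "nat \<Rightarrow> 'ap word \<Rightarrow> 'ap word" where
  "suffix_word k w = (\<lambda>i. w (i + k))"

fun ltl_sat :: "'ap word \<Rightarrow> 'ap ltl \<Rightarrow> bool" where
  "ltl_sat w Bot = False"
| "ltl_sat w (Prop p) = (p \<in> w 0)"
| "ltl_sat w (Neg \<phi>) = (\<not> ltl_sat w \<phi>)"
| "ltl_sat w (Or \<phi> \<psi>) = (ltl_sat w \<phi> \<or> ltl_sat w \<psi>)"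
| "ltl_sat w (Next \<phi>) = ltl_sat (suffix_word 1 w) \<phi>"
| "ltl_sat w (Until \<phi> \<psi>) =
     (\<exists>k. ltl_sat (suffix_word k w) \<psi> \<and> (\<forall>j<k. ltl_sat (suffix_word j w) \<phi>))"

text \<open>States are taken to be natural numbers;
  since S is required to be finite, every finite Kripke structure is isomorphic to one of
  this form, and LTL satisfaction depends only on the trace set.\<close>
record 'ap kripke =
  kS :: "nat set"
  kI :: "nat set"
  kT :: "(nat \<times> nat) set"
  kL :: "nat \<Rightarrow> 'ap set"

definition kripke_wf :: "'ap kripke \<Rightarrow> bool" where
  "kripke_wf M \<longleftrightarrow> finite (kS M) \<and> kI M \<noteq> {} \<and> kI M \<subseteq> kS M \<and> kT M \<subseteq> kS M \<times> kS M
     \<and> (\<forall>s\<in>kS M. \<exists>t. (s, t) \<in> kT M)"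

definition kripke_traces :: "'ap kripke \<Rightarrow> 'ap word set" where
  "kripke_traces M = {(\<lambda>i. kL M (p i)) | p.
      p 0 \<in> kI M \<and> (\<forall>i. (p i, p (Suc i)) \<in> kT M)}"

definition kripke_models :: "'ap kripke \<Rightarrow> 'ap ltl \<Rightarrow> bool" where
  "kripke_models M \<phi> \<longleftrightarrow> (\<forall>\<pi>\<in>kripke_traces M. ltl_sat \<pi> \<phi>)"

definition Cn_LTL :: "('ap::finite) ltl set \<Rightarrow> 'ap ltl set" where
  "Cn_LTL X = {\<phi>. \<forall>M. kripke_wf M \<longrightarrow> (\<forall>\<psi>\<in>X. kripke_models M \<psi>) \<longrightarrow> kripke_models M \<phi>}"

text \<open>Buechi automata (Q, Sigma, Delta, Q0, R) over the alphabet 2^AP (the full type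
  'ap set); states of type 'q with Q finite.\<close>
record ('q, 'ap) buchi =
  bQ :: "'q set"
  bDelta :: "('q \<times> 'ap set \<times> 'q) set"
  bQ0 :: "'q set"
  bR :: "'q set"

definition buchi_wf :: "('q, 'ap) buchi \<Rightarrow> bool" where
  "buchi_wf A \<longleftrightarrow> finite (bQ A) \<and> bQ0 A \<subseteq> bQ A \<and> bR A \<subseteq> bQ A
     \<and> (\<forall>(q, a, q')\<in>bDelta A. q \<in> bQ A \<and> q' \<in> bQ A)"

definition buchi_lang :: "('q, 'ap) buchi \<Rightarrow> 'ap word set" where
  "buchi_lang A = {w. \<exists>r. r 0 \<in> bQ0 A \<and> (\<forall>i. (r i, w i, r (Suc i)) \<in> bDelta A)
      \<and> (\<exists>\<^sub>\<infinity> i. r i \<in> bR A)}"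

definition supp :: "('q, 'ap) buchi \<Rightarrow> 'ap ltl set" where
  "supp A = {\<phi>. \<forall>\<pi>\<in>buchi_lang A. ltl_sat \<pi> \<phi>}"

end

theory Submission imports Defs begin

definition holds :: "'ap word \<Rightarrow> nat \<Rightarrow> 'ap ltl \<Rightarrow> bool" where
  "holds w n \<phi> = ltl_sat (suffix_word n w) \<phi>"

lemma suffix_suffix: "suffix_word k (suffix_word n w) = suffix_word (n+k) w"
  unfolding suffix_word_def by (simp add: algebra_simps)

lemma holds_simps[simp]:
 "\<not> holds w n Bot"
 "holds w n (Prop p) = (p \<in> w n)"
 "holds w n (Neg a) = (\<not> holds w n a)"
 "holds w n (Or a b) = (holds w n a \<or> holds w n b)"
 "holds w n (Next a) = holds w (Suc n) a"
  by (simp_all add: holds_def suffix_suffix) (simp add: suffix_word_def)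

lemma holds_Until:
 "holds w n (Until a b) = (\<exists>k. holds w (n+k) b \<and> (\<forall>l<k. holds w (n+l) a))"
  by (simp add: holds_def suffix_suffix)

lemma holds_0: "ltl_sat w \<phi> = holds w 0 \<phi>"
  by (simp add: holds_def suffix_word_def)

lemma until_unfold:
  "holds w n (Until a b) = (holds w n b \<or> holds w n a \<and> holds w (Suc n) (Until a b))"
proof
  assume "holds w n (Until a b)"
  then obtain k where k: "holds w (n+k) b" "\<forall>l<k. holds w (n+l) a" by (auto simp: holds_Until)
  show "holds w n b \<or> holds w n a \<and> holds w (Suc n) (Until a b)"
  proof (cases k)
    case 0 then show ?thesis using k by simp
  next
    case (Suc k')
    have "holds w (Suc n + k') b" using k Suc by simp
    moreover have "\<forall>l<k'. holds w (Suc n + l) a" using k Suc by auto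
    moreover have "holds w n a" using k(2) Suc by (metis add_0_right zero_less_Suc)
    ultimately show ?thesis by (auto simp: holds_Until)
  qed
next
  assume "holds w n b \<or> holds w n a \<and> holds w (Suc n) (Until a b)"
  then show "holds w n (Until a b)"
  proof
    assume "holds w n b" then show ?thesis unfolding holds_Until by (auto intro: exI[of _ 0])
  next
    assume h: "holds w n a \<and> holds w (Suc n) (Until a b)"
    then obtain k where k: "holds w (Suc n+k) b" "\<forall>l<k. holds w (Suc n+l) a" by (auto simp: holds_Until)
    have "holds w (n + Suc k) b" using k by simp
    moreover have "\<forall>l<Suc k. holds w (n+l) a"
    proof (intro allI impI)
      fix l assume "l < Suc k"
      then show "holds w (n+l) a" using h k(2) by (cases l) auto
    qed
    ultimately show ?thesis unfolding holds_Until by blast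
  qed
qed

lemma until_ext:
  "holds w (n+d) (Until a b) \<Longrightarrow> \<forall>l<d. holds w (n+l) a \<Longrightarrow> holds w n (Until a b)"
proof (induction d arbitrary: n)
  case 0 then show ?case by simp
next
  case (Suc d)
  have "holds w (Suc n + d) (Until a b)" using Suc.prems(1) by simp
  moreover have "\<forall>l<d. holds w (Suc n + l) a"
  proof (intro allI impI)
    fix l assume "l < d"
    then show "holds w (Suc n + l) a" using Suc.prems(2)[rule_format, of "Suc l"] by simp
  qed
  ultimately have "holds w (Suc n) (Until a b)"
    using Suc.IH[of "Suc n"] by blast
  moreover have "holds w n a" using Suc.prems(2) by (metis add_0_right zero_less_Suc)
  ultimately show ?case using until_unfold by blast
qed

lemma until_least:
  assumes "holds w n (Until a b)"
  shows "\<exists>k. holds w (n+k) b \<and> (\<forall>l<k. holds w (n+l) a \<and> \<not> holds w (n+l) b)"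
proof -
  obtain k where k: "holds w (n+k) b" "\<forall>l<k. holds w (n+l) a" using assms by (auto simp: holds_Until)
  obtain k0 where k0: "holds w (n+k0) b" "\<forall>l<k0. \<not> holds w (n+l) b"
    using exists_least_iff[of "\<lambda>k. holds w (n+k) b"] k(1) by blast
  have "k0 \<le> k" using k0(2) k(1) by (meson not_le)
  then show ?thesis using k0 k(2) by (intro exI[of _ k0]) auto
qed

definition lnext :: "nat \<Rightarrow> nat \<Rightarrow> nat \<Rightarrow> nat" where
  "lnext i j m = (if Suc m < j then Suc m else i)"

fun lpos :: "nat \<Rightarrow> nat \<Rightarrow> nat \<Rightarrow> nat" where
  "lpos i j 0 = 0"
| "lpos i j (Suc n) = lnext i j (lpos i j n)"

lemma lpos_lt: "i < j \<Longrightarrow> lpos i j n < j"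
  by (induction n) (auto simp: lnext_def)

lemma lpos_add: "lpos i j n + d < j \<Longrightarrow> lpos i j (n+d) = lpos i j n + d"
  by (induction d) (auto simp: lnext_def)

lemma lpos_wrap: assumes "i < j" shows "lpos i j (n + (j - lpos i j n)) = i"
proof -
  let ?x = "lpos i j n"
  have x: "?x < j" using lpos_lt[OF assms] .
  have "lpos i j (n + (j - 1 - ?x)) = j - 1" using lpos_add[of i j n "j - 1 - ?x"] x by simp
  moreover have "n + (j - ?x) = Suc (n + (j - 1 - ?x))" using x by simp
  ultimately show ?thesis by (simp add: lnext_def)
qed

lemma lpos_succ: "i < j \<Longrightarrow> lpos i j (Suc n) = Suc (lpos i j n) \<or> (Suc (lpos i j n) = j \<and> lpos i j (Suc n) = i)"
  using lpos_lt[of i j n] by (auto simp: lnext_def)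

lemma lpos_inf: assumes "i \<le> a" "a < j" shows "\<exists>n>m. lpos i j n = a"
proof -
  let ?x = "lpos i j (Suc m)"
  show ?thesis
  proof (cases "?x \<le> a")
    case True
    then show ?thesis using lpos_add[of i j "Suc m" "a - ?x"] assms
      by (intro exI[of _ "Suc m + (a - ?x)"]) auto
  next
    case False
    define n1 where "n1 = Suc m + (j - ?x)"
    have ij: "i < j" using assms by simp
    have "lpos i j n1 = i" unfolding n1_def by (rule lpos_wrap[OF ij])
    then show ?thesis using lpos_add[of i j n1 "a - i"] assms
      by (intro exI[of _ "n1 + (a - i)"]) (auto simp: n1_def)
  qed
qed


lemma lasso_sim:
  fixes \<pi> :: "'ap word"
  assumes ij: "i < j"
  and cl1: "\<And>a. Neg a \<in> S \<Longrightarrow> a \<in> S"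
  and cl2: "\<And>a b. Or a b \<in> S \<Longrightarrow> a \<in> S \<and> b \<in> S"
  and cl3: "\<And>a. Next a \<in> S \<Longrightarrow> a \<in> S"
  and cl4: "\<And>a b. Until a b \<in> S \<Longrightarrow> a \<in> S \<and> b \<in> S"
  and ty: "\<And>\<psi>. \<psi> \<in> S \<Longrightarrow> holds \<pi> i \<psi> = holds \<pi> j \<psi>"
  and ev: "\<And>b k. b \<in> S \<Longrightarrow> i \<le> k \<Longrightarrow> holds \<pi> k b \<Longrightarrow> \<exists>q. i \<le> q \<and> q < j \<and> holds \<pi> q b"
  shows "\<psi> \<in> S \<Longrightarrow> holds (\<lambda>n. \<pi> (lpos i j n)) n \<psi> = holds \<pi> (lpos i j n) \<psi>"
proof (induction \<psi> arbitrary: n)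
  define f where "f = lpos i j"
  define \<sigma> where "\<sigma> = (\<lambda>n. \<pi> (lpos i j n))"
  have succ: "holds \<pi> (f (Suc m)) \<psi> = holds \<pi> (Suc (f m)) \<psi>" if "\<psi> \<in> S" for m \<psi>
    using lpos_succ[OF ij, of m] ty[OF that] unfolding f_def by auto
  {
    case Bot then show ?case by simp
  next
    case (Prop p) then show ?case by simp
  next
    case (Neg a)
    have "a \<in> S" using cl1 Neg.prems by blast
    then show ?case using Neg.IH by simp
  next
    case (Or a b)
    have "a \<in> S" "b \<in> S" using cl2 Or.prems by blast+
    then show ?case using Or.IH by simp
  next
    case (Next a)
    have "holds (\<lambda>n. \<pi> (lpos i j n)) (Suc n) a = holds \<pi> (f (Suc n)) a"
      using Next cl3 unfolding f_def by blast
    also have "\<dots> = holds \<pi> (Suc (f n)) a" using succ cl3 Next.prems by blast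
    finally show ?case unfolding f_def by simp
  next
    case (Until a b)
    have aS: "a \<in> S" and bS: "b \<in> S" using cl4[OF Until.prems] by blast+
    have IHa: "\<And>m. holds \<sigma> m a = holds \<pi> (f m) a" using Until.IH(1) aS unfolding \<sigma>_def f_def by blast
    have IHb: "\<And>m. holds \<sigma> m b = holds \<pi> (f m) b" using Until.IH(2) bS unfolding \<sigma>_def f_def by blast
    have fwd: "\<And>m. holds \<sigma> (m+k) b \<Longrightarrow> (\<forall>l<k. holds \<sigma> (m+l) a) \<Longrightarrow> holds \<pi> (f m) (Until a b)" for k
    proof (induction k)
      case 0 then show ?case using IHb by (auto simp: holds_Until intro: exI[of _ 0])
    next
      case (Suc k m)
      have "holds \<sigma> (Suc m + k) b" using Suc.prems(1) by simp
      moreover have "\<forall>l<k. holds \<sigma> (Suc m + l) a"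
      proof (intro allI impI)
        fix l assume "l < k"
        then show "holds \<sigma> (Suc m + l) a" using Suc.prems(2)[rule_format, of "Suc l"] by simp
      qed
      ultimately have "holds \<pi> (f (Suc m)) (Until a b)" using Suc.IH by blast
      then have "holds \<pi> (Suc (f m)) (Until a b)" using succ Until.prems by blast
      moreover have "holds \<pi> (f m) a" using Suc.prems(2)[rule_format, of 0] IHa by simp
      ultimately show ?case using until_unfold by blast
    qed
    have caseA: "holds \<sigma> m (Until a b)"
      if "f m + k < j" "holds \<pi> (f m + k) b" "\<forall>l<k. holds \<pi> (f m + l) a" for m k
    proof -
      have fl: "f (m + l) = f m + l" if "l \<le> k" for l
        using lpos_add[of i j m l] that \<open>f m + k < j\<close> unfolding f_def by simp
      have "holds \<sigma> (m+k) b" using IHb fl[of k] that(2) by simp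
      moreover have "\<forall>l<k. holds \<sigma> (m+l) a" using IHa fl that(3) by simp
      ultimately show ?thesis unfolding holds_Until by blast
    qed
    have bwd: "holds \<sigma> n (Until a b)" if H: "holds \<pi> (f n) (Until a b)"
    proof -
      obtain k where k: "holds \<pi> (f n + k) b" "\<forall>l<k. holds \<pi> (f n + l) a \<and> \<not> holds \<pi> (f n + l) b"
        using until_least[OF H] by blast
      show ?thesis
      proof (cases "f n + k < j")
        case True then show ?thesis using caseA k by blast
      next
        case False
        have fnj: "f n < j" using lpos_lt[OF ij] unfolding f_def by simp
        define d where "d = j - f n"
        have dk: "d \<le> k" using False d_def by simp
        have "holds \<pi> (j + (k - d)) b" using k(1) dk d_def fnj by (simp add: add.commute)
        moreover have "\<forall>l<k-d. holds \<pi> (j + l) a"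
        proof (intro allI impI)
          fix l assume "l < k - d"
          then show "holds \<pi> (j + l) a" using k(2)[rule_format, of "d + l"] d_def fnj
            by (simp add: add.assoc)
        qed
        ultimately have "holds \<pi> j (Until a b)" unfolding holds_Until by blast
        then have Hi: "holds \<pi> i (Until a b)" using ty Until.prems by blast
        have "i \<le> f n + k" using False ij by simp
        then obtain q where q: "i \<le> q" "q < j" "holds \<pi> q b"
          using ev[OF bS, of "f n + k"] k(1) by blast
        obtain k' where k': "holds \<pi> (i + k') b" "\<forall>l<k'. holds \<pi> (i + l) a \<and> \<not> holds \<pi> (i + l) b"
          using until_least[OF Hi] by blast
        have "i + k' < j"
        proof (rule ccontr)
          assume "\<not> i + k' < j"
          then have "q - i < k'" using q by simp
          then show False using k'(2)[rule_format, of "q - i"] q by simp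
        qed
        have wrap: "f (n + d) = i" using lpos_wrap[OF ij, of n] unfolding f_def d_def by simp
        have "holds \<sigma> (n + d) (Until a b)"
          using caseA[of "n + d" k'] wrap \<open>i + k' < j\<close> k' by simp
        moreover have "\<forall>l<d. holds \<sigma> (n + l) a"
        proof (intro allI impI)
          fix l assume "l < d"
          then have "f (n + l) = f n + l" using lpos_add[of i j n l] d_def unfolding f_def by simp
          moreover have "l < k" using \<open>l < d\<close> dk by simp
          ultimately show "holds \<sigma> (n + l) a" using IHa k(2) by simp
        qed
        ultimately show ?thesis using until_ext by blast
      qed
    qed
    show ?case
    proof
      assume "holds (\<lambda>n. \<pi> (lpos i j n)) n (Until a b)"
      then have "holds \<sigma> n (Until a b)" unfolding \<sigma>_def .
      then obtain k where "holds \<sigma> (n+k) b" "\<forall>l<k. holds \<sigma> (n+l) a"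
        unfolding holds_Until by blast
      then have "holds \<pi> (f n) (Until a b)" by (rule fwd)
      then show "holds \<pi> (lpos i j n) (Until a b)" unfolding f_def .
    next
      assume "holds \<pi> (lpos i j n) (Until a b)"
      then have "holds \<sigma> n (Until a b)" using bwd unfolding f_def by blast
      then show "holds (\<lambda>n. \<pi> (lpos i j n)) n (Until a b)" unfolding \<sigma>_def .
    qed
  }
qed


fun subs :: "'ap ltl \<Rightarrow> 'ap ltl set" where
  "subs Bot = {Bot}"
| "subs (Prop p) = {Prop p}"
| "subs (Neg a) = insert (Neg a) (subs a)"
| "subs (Or a b) = insert (Or a b) (subs a \<union> subs b)"
| "subs (Next a) = insert (Next a) (subs a)"
| "subs (Until a b) = insert (Until a b) (subs a \<union> subs b)"

lemma subs_finite: "finite (subs \<phi>)" by (induction \<phi>) auto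
lemma subs_self: "\<phi> \<in> subs \<phi>" by (cases \<phi>) auto
lemma subs_trans: "\<psi> \<in> subs \<phi> \<Longrightarrow> subs \<psi> \<subseteq> subs \<phi>" by (induction \<phi>) auto

lemma subs_cl:
  "Neg a \<in> subs \<phi> \<Longrightarrow> a \<in> subs \<phi>"
  "Or a b \<in> subs \<phi> \<Longrightarrow> a \<in> subs \<phi> \<and> b \<in> subs \<phi>"
  "Next a \<in> subs \<phi> \<Longrightarrow> a \<in> subs \<phi>"
  "Until a b \<in> subs \<phi> \<Longrightarrow> a \<in> subs \<phi> \<and> b \<in> subs \<phi>"
  using subs_trans[of "Neg a" \<phi>] subs_self[of a] apply force
  using subs_trans[of "Or a b" \<phi>] subs_self[of a] subs_self[of b] apply force
  using subs_trans[of "Next a" \<phi>] subs_self[of a] apply force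
  using subs_trans[of "Until a b" \<phi>] subs_self[of a] subs_self[of b] apply force
  done

lemma eventually_inf:
  "finite S \<Longrightarrow> \<exists>N. \<forall>b\<in>S. \<forall>k\<ge>N. holds \<pi> k b \<longrightarrow> (\<exists>\<^sub>\<infinity> k. holds \<pi> k b)"
proof (induction S rule: finite_induct)
  case empty then show ?case by simp
next
  case (insert b S)
  then obtain N where N: "\<forall>b\<in>S. \<forall>k\<ge>N. holds \<pi> k b \<longrightarrow> (\<exists>\<^sub>\<infinity> k. holds \<pi> k b)" by blast
  show ?case
  proof (cases "\<exists>\<^sub>\<infinity> k. holds \<pi> k b")
    case True then show ?thesis using N by (intro exI[of _ N]) auto
  next
    case False
    then obtain m where m: "\<forall>n\<ge>m. \<not> holds \<pi> n b" using MOST_nat_le not_INFM by metis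
    show ?thesis using N m by (intro exI[of _ "max N m"]) auto
  qed
qed

lemma bound_exists:
  "finite X \<Longrightarrow> \<forall>x\<in>X. \<exists>p. P x p \<Longrightarrow> \<exists>M::nat. \<forall>x\<in>X. \<exists>p<M. P x p"
proof (induction X rule: finite_induct)
  case empty then show ?case by simp
next
  case (insert x X)
  then obtain M where M: "\<forall>x\<in>X. \<exists>p<M. P x p" by blast
  obtain p where "P x p" using insert.prems by blast
  have "\<forall>y\<in>insert x X. \<exists>q<max M (Suc p). P y q"
  proof
    fix y assume "y \<in> insert x X"
    then show "\<exists>q<max M (Suc p). P y q"
    proof
      assume "y = x" then show ?thesis using \<open>P x p\<close> by (intro exI[of _ p]) simp
    next
      assume "y \<in> X" then obtain q where "q < M" "P y q" using M by blast
      then show ?thesis by (intro exI[of _ q]) simp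
    qed
  qed
  then show ?case by blast
qed


lemma lasso_kripke:
  fixes \<pi> :: "'ap word" and i j :: nat
  assumes ij: "i < j"
  defines "M \<equiv> \<lparr>kS = {..<j}, kI = {0}, kT = {(m, lnext i j m) | m. m < j}, kL = \<pi>\<rparr>"
  shows "kripke_wf M" "kripke_traces M = {(\<lambda>n. \<pi> (lpos i j n))}"
proof -
  show "kripke_wf M" unfolding M_def kripke_wf_def using ij by (auto simp: lnext_def)
  have path: "p n = lpos i j n" if "p 0 \<in> {0}" "\<forall>m. (p m, p (Suc m)) \<in> {(m, lnext i j m) | m. m < j}" for p :: "nat \<Rightarrow> nat" and n
  proof (induction n)
    case 0 then show ?case using that by simp
  next
    case (Suc n) then show ?case using that(2)[rule_format, of n] by auto
  qed
  have lp: "\<forall>m. (lpos i j m, lpos i j (Suc m)) \<in> {(m, lnext i j m) | m. m < j}"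
    using lpos_lt[OF ij] by auto
  show "kripke_traces M = {(\<lambda>n. \<pi> (lpos i j n))}"
  proof
    show "kripke_traces M \<subseteq> {(\<lambda>n. \<pi> (lpos i j n))}"
    proof
      fix w assume "w \<in> kripke_traces M"
      then obtain p where w: "w = (\<lambda>n. \<pi> (p n))" and p0: "p 0 \<in> {0}"
        and pT: "\<forall>m. (p m, p (Suc m)) \<in> {(m, lnext i j m) | m. m < j}"
        unfolding M_def kripke_traces_def by auto
      have "p = lpos i j" using path[OF p0 pT] by blast
      then show "w \<in> {(\<lambda>n. \<pi> (lpos i j n))}" using w by simp
    qed
  next
    have "(\<lambda>n. \<pi> (lpos i j n)) \<in> kripke_traces M"
      unfolding M_def kripke_traces_def using lp
      by (intro CollectI exI[of _ "lpos i j"]) simp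
    then show "{(\<lambda>n. \<pi> (lpos i j n))} \<subseteq> kripke_traces M" by simp
  qed
qed

theorem mainTheorem13:
  fixes A :: "('q, 'ap::finite) buchi"
  assumes "buchi_wf A"
  shows "Cn_LTL (supp A) = supp A"
proof
  show "supp A \<subseteq> Cn_LTL (supp A)" unfolding Cn_LTL_def by blast
next
  show "Cn_LTL (supp A) \<subseteq> supp A"
  proof
    fix \<phi> assume phiCn: "\<phi> \<in> Cn_LTL (supp A)"
    show "\<phi> \<in> supp A"
    proof (rule ccontr)
      assume "\<phi> \<notin> supp A"
      then obtain \<pi> where piL: "\<pi> \<in> buchi_lang A" and npi: "\<not> ltl_sat \<pi> \<phi>"
        unfolding supp_def by blast
      then obtain r where r0: "r 0 \<in> bQ0 A" and rT: "\<forall>m. (r m, \<pi> m, r (Suc m)) \<in> bDelta A"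
        and rR: "\<exists>\<^sub>\<infinity> m. r m \<in> bR A" unfolding buchi_lang_def by blast
      have rQ: "r m \<in> bQ A" for m using rT[rule_format, of m] assms unfolding buchi_wf_def by blast
      define S where "S = subs \<phi>"
      have finS: "finite S" unfolding S_def by (rule subs_finite)
      obtain N where N: "\<forall>b\<in>S. \<forall>k\<ge>N. holds \<pi> k b \<longrightarrow> (\<exists>\<^sub>\<infinity> k. holds \<pi> k b)"
        using eventually_inf[OF finS] by blast
      define pr where "pr = (\<lambda>m. (r m, {\<psi>\<in>S. holds \<pi> m \<psi>}))"
      define A0 where "A0 = {m::nat. N \<le> m}"
      have infA0: "\<not> finite A0" unfolding A0_def infinite_nat_iff_unbounded_le
      proof (intro allI)
        fix m show "\<exists>n\<ge>m. n \<in> {m. N \<le> m}" by (intro exI[of _ "max m N"]) simp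
      qed
      have "pr ` A0 \<subseteq> bQ A \<times> Pow S" unfolding pr_def using rQ by auto
      moreover have "finite (bQ A \<times> Pow S)" using assms finS unfolding buchi_wf_def by simp
      ultimately have "finite (pr ` A0)" using finite_subset by blast
      then obtain i where iA0: "i \<in> A0" and infF: "\<not> finite {m\<in>A0. pr m = pr i}"
        using pigeonhole_infinite[OF infA0] by blast
      obtain aa where aa: "aa \<ge> i" "r aa \<in> bR A" using rR unfolding INFM_nat_le by blast
      define Inf where "Inf = {b\<in>S. \<exists>\<^sub>\<infinity> k. holds \<pi> k b}"
      have "finite Inf" using finS unfolding Inf_def by simp
      moreover have "\<forall>b\<in>Inf. \<exists>p. i \<le> p \<and> holds \<pi> p b" unfolding Inf_def INFM_nat_le by blast
      ultimately obtain Mb where Mb: "\<forall>b\<in>Inf. \<exists>p<Mb. i \<le> p \<and> holds \<pi> p b"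
        using bound_exists[of Inf "\<lambda>b p. i \<le> p \<and> holds \<pi> p b"] by blast
      obtain j where jF: "j \<in> {m\<in>A0. pr m = pr i}" and jge: "j \<ge> max Mb (Suc aa)"
        using infF unfolding infinite_nat_iff_unbounded_le by blast
      have ij: "i < j" using jge aa by simp
      have prij: "pr i = pr j" using jF by simp
      have rij: "r i = r j" using prij unfolding pr_def by simp
      have ty: "holds \<pi> i \<psi> = holds \<pi> j \<psi>" if "\<psi> \<in> S" for \<psi>
      proof -
        have "{\<psi>\<in>S. holds \<pi> i \<psi>} = {\<psi>\<in>S. holds \<pi> j \<psi>}" using prij unfolding pr_def by simp
        then show ?thesis using that by blast
      qed
      have ev: "\<exists>q. i \<le> q \<and> q < j \<and> holds \<pi> q b" if "b \<in> S" "i \<le> k" "holds \<pi> k b" for b k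
      proof -
        have "N \<le> k" using iA0 that(2) unfolding A0_def by simp
        then have "b \<in> Inf" using N that unfolding Inf_def by blast
        then show ?thesis using Mb jge by fastforce
      qed
      define \<sigma> where "\<sigma> = (\<lambda>n. \<pi> (lpos i j n))"
      have sim: "holds \<sigma> n \<psi> = holds \<pi> (lpos i j n) \<psi>" if "\<psi> \<in> S" for \<psi> n
        unfolding \<sigma>_def
        by (rule lasso_sim[OF ij _ _ _ _ ty ev that]) (auto simp: S_def dest: subs_cl)
      have sigL: "\<sigma> \<in> buchi_lang A"
      proof -
        have "(r (lpos i j m), \<sigma> m, r (lpos i j (Suc m))) \<in> bDelta A" for m
        proof (cases "lpos i j (Suc m) = Suc (lpos i j m)")
          case True then show ?thesis using rT unfolding \<sigma>_def by simp
        next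
          case False
          then have "Suc (lpos i j m) = j" "lpos i j (Suc m) = i" using lpos_succ[OF ij, of m] by auto
          then show ?thesis using rT[rule_format, of "lpos i j m"] rij unfolding \<sigma>_def by simp
        qed
        moreover have "\<exists>\<^sub>\<infinity> m. r (lpos i j m) \<in> bR A"
          unfolding INFM_nat using lpos_inf[of i aa j] aa jge by fastforce
        ultimately show ?thesis unfolding buchi_lang_def using r0 by (intro CollectI exI[of _ "\<lambda>m. r (lpos i j m)"]) simp
      qed
      define M :: "'ap kripke" where "M = \<lparr>kS = {..<j}, kI = {0}, kT = {(m, lnext i j m) | m. m < j}, kL = \<pi>\<rparr>"
      have Mwf: "kripke_wf M" and Mtr: "kripke_traces M = {\<sigma>}"
        using lasso_kripke[OF ij, of \<pi>] unfolding M_def \<sigma>_def by auto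
      have "\<forall>\<psi>\<in>supp A. kripke_models M \<psi>"
        using sigL Mtr unfolding supp_def kripke_models_def by auto
      then have "kripke_models M \<phi>" using phiCn Mwf unfolding Cn_LTL_def by blast
      then have "holds \<sigma> 0 \<phi>" using Mtr unfolding kripke_models_def holds_0 by simp
      then have "holds \<pi> 0 \<phi>" using sim[of \<phi> 0] subs_self[of \<phi>] unfolding S_def by simp
      then show False using npi unfolding holds_0 by blast
    qed
  qed
qed

end
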